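(* Let $G=(V,E)$ be a finite Eulerian graph (every vertex has even degree). For $A\subseteq E$ let $\varepsilon(A)$ denote the number of Eulerian orientations of $(V,A)$ and $h(A)$ the number of half graphs of $(V,A)$. Let $G\times K_2$ be the bipartite double cover of $G$. Then $$\varepsilon(G\times K_2)=h(G\times K_2)=\sum_{A\subseteq E}\varepsilon(A)\,h(E\setminus A).$$
   Context: An Eulerian orientation of a graph is an orientation in which every vertex has in-degree equal to out-degree. A half graph of a graph $F$ is a subset $S$ of its edges such that every vertex $v$ is incident to exactly $d_F(v)/2$ edges of $S$. The bipartite double cover $G\times K_2$ has vertex set $V\times\{0,1\}$, and for every edge $uv\in E$ it contains the two edges $(u,0)(v,1)$ and $(u,1)(v,0)$. *)

theory Defs
  imports Main
begin

definition simple_graph :: "'a set \<Rightarrow> 'a set set \<Rightarrow> bool" where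
  "simple_graph V E \<longleftrightarrow> finite V \<and> (\<forall>e\<in>E. e \<subseteq> V \<and> card e = 2)"

definition degree :: "'a set set \<Rightarrow> 'a \<Rightarrow> nat" where
  "degree E v = card {e\<in>E. v \<in> e}"

definition orientation :: "'a set set \<Rightarrow> ('a \<times> 'a) set \<Rightarrow> bool" where
  "orientation A D \<longleftrightarrow>
     (\<forall>(u,v)\<in>D. {u,v} \<in> A) \<and>
     (\<forall>u v. {u,v} \<in> A \<longrightarrow> u \<noteq> v \<longrightarrow> ((u,v) \<in> D \<longleftrightarrow> (v,u) \<notin> D))"

definition eulerian_orientation :: "'a set \<Rightarrow> 'a set set \<Rightarrow> ('a \<times> 'a) set \<Rightarrow> bool" where
  "eulerian_orientation V A D \<longleftrightarrow> orientation A D \<and>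
     (\<forall>v\<in>V. card {u. (u,v) \<in> D} = card {w. (v,w) \<in> D})"

definition num_eul_or :: "'a set \<Rightarrow> 'a set set \<Rightarrow> nat" where
  "num_eul_or V A = card {D. eulerian_orientation V A D}"

definition half_graph :: "'a set \<Rightarrow> 'a set set \<Rightarrow> 'a set set \<Rightarrow> bool" where
  "half_graph V A S \<longleftrightarrow> S \<subseteq> A \<and> (\<forall>v\<in>V. 2 * degree S v = degree A v)"

definition num_half :: "'a set \<Rightarrow> 'a set set \<Rightarrow> nat" where
  "num_half V A = card {S. half_graph V A S}"

text \<open>Bipartite double cover G \<times> K_2, with layers False (= 0) and True (= 1).\<close>
definition dc_vertices :: "'a set \<Rightarrow> ('a \<times> bool) set" where
  "dc_vertices V = V \<times> (UNIV :: bool set)"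

definition dc_edges :: "'a set set \<Rightarrow> ('a \<times> bool) set set" where
  "dc_edges E = {{(u, False), (v, True)} | u v. {u, v} \<in> E}"

end

theory Submission imports Defs begin

lemma nbr:
  assumes "\<forall>e\<in>S. card e = 2"
  shows "degree S x = card {w. {x,w} \<in> S}"
proof -
  have "bij_betw (\<lambda>w. {x,w}) {w. {x,w}\<in>S} {e\<in>S. x\<in>e}"
    unfolding bij_betw_def inj_on_def
  proof (intro conjI ballI impI)
    fix w w' assume "w \<in> {w. {x,w}\<in>S}" "w' \<in> {w. {x,w}\<in>S}" "{x,w} = {x,w'}"
    moreover have "card {x,w} = 2" using assms \<open>w \<in> _\<close> by auto
    ultimately show "w = w'" by (metis card_1_singleton_iff doubleton_eq_iff insert_absorb2 numeral_eq_one_iff semiring_norm(85))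
  next
    show "(\<lambda>w. {x, w}) ` {w. {x, w} \<in> S} = {e \<in> S. x \<in> e}"
    proof
      show "{e \<in> S. x \<in> e} \<subseteq> (\<lambda>w. {x, w}) ` {w. {x, w} \<in> S}"
      proof
        fix e assume "e \<in> {e \<in> S. x \<in> e}"
        then have "e \<in> S" "x \<in> e" by auto
        then obtain a b where "e = {a,b}" using assms by (meson card_2_iff)
        then show "e \<in> (\<lambda>w. {x, w}) ` {w. {x, w} \<in> S}" using \<open>e\<in>S\<close> \<open>x\<in>e\<close>
          by (auto simp: insert_commute)
      qed
    qed auto
  qed
  then show ?thesis by (simp add: degree_def bij_betw_same_card)
qed

lemma dc_snd: "{a,b} \<in> dc_edges E \<Longrightarrow> snd a \<noteq> snd b"
  unfolding dc_edges_def by (auto simp: doubleton_eq_iff)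

lemma dc_card: "e \<in> dc_edges E \<Longrightarrow> card e = 2"
  unfolding dc_edges_def by auto

lemma dc_form: "e \<in> dc_edges E \<Longrightarrow> \<exists>a b. e = {a,b} \<and> \<not> snd a"
  unfolding dc_edges_def by auto

lemma dc_fin: assumes "simple_graph V E" shows "finite (dc_edges E)"
proof -
  have fV: "finite V" using assms by (simp add: simple_graph_def)
  have "dc_edges E \<subseteq> Pow (V \<times> UNIV)"
    using assms unfolding dc_edges_def simple_graph_def by auto
  then show ?thesis using fV by (meson finite_Pow_iff finite_SigmaI finite_UNIV finite_subset)
qed

definition orS :: "('a\<times>bool) set set \<Rightarrow> ('a\<times>bool) set set \<Rightarrow> (('a\<times>bool)\<times>('a\<times>bool)) set" where
  "orS F S = {(a,b). {a,b} \<in> F \<and> (snd a \<longleftrightarrow> {a,b} \<notin> S)}"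

definition hgD :: "('a\<times>bool) set set \<Rightarrow> (('a\<times>bool)\<times>('a\<times>bool)) set \<Rightarrow> ('a\<times>bool) set set" where
  "hgD F D = {e\<in>F. \<exists>a b. e = {a,b} \<and> (a,b) \<in> D \<and> \<not> snd a}"

lemma orS_orient: "orientation (dc_edges E) (orS (dc_edges E) S)"
  unfolding orientation_def
proof (intro conjI allI impI)
  show "\<forall>(u, v)\<in>orS (dc_edges E) S. {u, v} \<in> dc_edges E" by (auto simp: orS_def)
next
  fix u v assume e: "{u,v} \<in> dc_edges E" and "u \<noteq> v"
  have s: "snd u \<noteq> snd v" using dc_snd[OF e] .
  have c: "{v,u} = {u,v}" by (rule insert_commute)
  show "(u, v) \<in> orS (dc_edges E) S \<longleftrightarrow> (v, u) \<notin> orS (dc_edges E) S"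
    unfolding orS_def using e s c by auto
qed

lemma hg_or: "S \<subseteq> dc_edges E \<Longrightarrow> hgD (dc_edges E) (orS (dc_edges E) S) = S"
proof
  assume S: "S \<subseteq> dc_edges E"
  show "hgD (dc_edges E) (orS (dc_edges E) S) \<subseteq> S"
    unfolding hgD_def orS_def by auto
  show "S \<subseteq> hgD (dc_edges E) (orS (dc_edges E) S)"
  proof
    fix e assume "e \<in> S"
    then have eF: "e \<in> dc_edges E" using S by auto
    then obtain a b where "e = {a,b}" "\<not> snd a" using dc_form by blast
    moreover have "(a,b) \<in> orS (dc_edges E) S"
      unfolding orS_def using eF \<open>e\<in>S\<close> \<open>e = {a,b}\<close> \<open>\<not> snd a\<close> by auto
    ultimately show "e \<in> hgD (dc_edges E) (orS (dc_edges E) S)"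
      unfolding hgD_def using eF by blast
  qed
qed

lemma or_hg: assumes "orientation (dc_edges E) D"
  shows "orS (dc_edges E) (hgD (dc_edges E) D) = D"
proof -
  let ?F = "dc_edges E"
  have o1: "\<And>a b. (a,b) \<in> D \<Longrightarrow> {a,b} \<in> ?F" using assms unfolding orientation_def by auto
  have o2: "\<And>a b. {a,b} \<in> ?F \<Longrightarrow> (a,b) \<in> D \<longleftrightarrow> (b,a) \<notin> D"
    using assms dc_snd unfolding orientation_def by fastforce
  show ?thesis
  proof (intro set_eqI iffI)
    fix p assume p: "p \<in> D"
    obtain a b where ab: "p = (a,b)" by (cases p)
    have e: "{a,b} \<in> ?F" using o1 p ab by auto
    show "p \<in> orS ?F (hgD ?F D)"
    proof (cases "snd a")
      case False
      then have "{a,b} \<in> hgD ?F D" unfolding hgD_def using e p ab by blast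
      then show ?thesis using False e ab unfolding orS_def by auto
    next
      case True
      have "{a,b} \<notin> hgD ?F D"
      proof
        assume "{a,b} \<in> hgD ?F D"
        then obtain a' b' where "{a,b} = {a',b'}" "(a',b') \<in> D" "\<not> snd a'" unfolding hgD_def by auto
        then show False using True o2[OF e] p ab by (auto simp: doubleton_eq_iff)
      qed
      then show ?thesis using e True ab unfolding orS_def by auto
    qed
  next
    fix p assume p: "p \<in> orS ?F (hgD ?F D)"
    obtain a b where ab: "p = (a,b)" by (cases p)
    have e: "{a,b} \<in> ?F" and c: "snd a \<longleftrightarrow> {a,b} \<notin> hgD ?F D" using p ab unfolding orS_def by auto
    show "p \<in> D"
    proof (cases "snd a")
      case False
      then have "{a,b} \<in> hgD ?F D" using c by simp
      then obtain a' b' where q: "{a,b} = {a',b'}" "(a',b') \<in> D" "\<not> snd a'" unfolding hgD_def by blast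
      have "a' = a \<and> b' = b" using q(1,3) False dc_snd[OF e] by (auto simp: doubleton_eq_iff)
      then show ?thesis using q(2) ab by simp
    next
      case True
      have sb: "\<not> snd b" using dc_snd[OF e] True by auto
      have "(b,a) \<notin> D"
      proof
        assume "(b,a) \<in> D"
        moreover have "{a,b} = {b,a}" by (rule insert_commute)
        ultimately have "{a,b} \<in> hgD ?F D" using e sb unfolding hgD_def by blast
        then show False using c True by auto
      qed
      then show ?thesis using o2[OF e] ab by auto
    qed
  qed
qed

lemma eul_cond:
  assumes S: "S \<subseteq> dc_edges E" and fin: "finite (dc_edges E)"
  shows "(card {u. (u,x) \<in> orS (dc_edges E) S} = card {w. (x,w) \<in> orS (dc_edges E) S})
      \<longleftrightarrow> 2 * degree S x = degree (dc_edges E) x"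
proof -
  let ?F = "dc_edges E"
  have out: "{w. (x,w) \<in> orS ?F S} = (if snd x then {w. {x,w} \<in> ?F - S} else {w. {x,w} \<in> S})"
    using S unfolding orS_def by auto
  have inn: "{u. (u,x) \<in> orS ?F S} = (if snd x then {w. {x,w} \<in> S} else {w. {x,w} \<in> ?F - S})"
  proof -
    have "\<And>u. (u,x) \<in> orS ?F S \<longleftrightarrow> {x,u} \<in> ?F \<and> (\<not> snd x \<longleftrightarrow> {x,u} \<notin> S)"
    proof -
      fix u
      have c: "{u,x} = {x,u}" by (rule insert_commute)
      show "(u,x) \<in> orS ?F S \<longleftrightarrow> {x,u} \<in> ?F \<and> (\<not> snd x \<longleftrightarrow> {x,u} \<notin> S)"
        unfolding orS_def using dc_snd[of u x E] c by auto
    qed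
    then show ?thesis using S by auto
  qed
  have c2: "\<forall>e\<in>S. card e = 2" "\<forall>e\<in>?F - S. card e = 2" using S dc_card by auto
  have dS: "degree S x = card {w. {x,w} \<in> S}" using nbr[OF c2(1)] .
  have dFS: "degree (?F - S) x = card {w. {x,w} \<in> ?F - S}" using nbr[OF c2(2)] .
  have dF: "degree ?F x = degree S x + degree (?F - S) x"
  proof -
    have "{e\<in>?F. x\<in>e} = {e\<in>S. x\<in>e} \<union> {e\<in>?F - S. x\<in>e}" using S by auto
    moreover have "finite {e\<in>S. x\<in>e}" "finite {e\<in>?F - S. x\<in>e}" using S fin
      by (auto intro: finite_subset)
    ultimately show ?thesis unfolding degree_def by (simp add: card_Un_disjoint disjoint_iff)
  qed
  show ?thesis
  proof (cases "snd x")
    case True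
    then show ?thesis using out inn dS dFS dF by simp
  next
    case False
    then show ?thesis using out inn dS dFS dF by (simp add: eq_commute)
  qed
qed

lemma part1:
  assumes G: "simple_graph V E"
  shows "num_eul_or (dc_vertices V) (dc_edges E) = num_half (dc_vertices V) (dc_edges E)"
proof -
  let ?F = "dc_edges E" and ?W = "dc_vertices V"
  have fin: "finite ?F" using dc_fin[OF G] .
  have iff: "eulerian_orientation ?W ?F (orS ?F S) \<longleftrightarrow> half_graph ?W ?F S" if "S \<subseteq> ?F" for S
    unfolding eulerian_orientation_def half_graph_def using orS_orient[of E S] eul_cond[OF that fin] that
    by auto
  have eq: "{D. eulerian_orientation ?W ?F D} = orS ?F ` {S. half_graph ?W ?F S}"
  proof
    show "orS ?F ` {S. half_graph ?W ?F S} \<subseteq> {D. eulerian_orientation ?W ?F D}"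
      using iff unfolding half_graph_def by auto
  next
    show "{D. eulerian_orientation ?W ?F D} \<subseteq> orS ?F ` {S. half_graph ?W ?F S}"
    proof
      fix D assume "D \<in> {D. eulerian_orientation ?W ?F D}"
      then have eD: "eulerian_orientation ?W ?F D" by simp
      then have o: "orientation ?F D" unfolding eulerian_orientation_def by simp
      have sub: "hgD ?F D \<subseteq> ?F" unfolding hgD_def by auto
      have "D = orS ?F (hgD ?F D)" using or_hg[OF o] by simp
      moreover then have "half_graph ?W ?F (hgD ?F D)" using iff[OF sub] eD by simp
      ultimately show "D \<in> orS ?F ` {S. half_graph ?W ?F S}" by blast
    qed
  qed
  have inj: "inj_on (orS ?F) {S. half_graph ?W ?F S}"
    by (rule inj_on_inverseI[where g = "hgD ?F"]) (simp add: hg_or half_graph_def)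
  show ?thesis unfolding num_eul_or_def num_half_def eq using card_image[OF inj] by simp
qed

definition symB :: "'a set set \<Rightarrow> ('a \<times> 'a) set" where
  "symB B = {(u,v). {u,v} \<in> B}"

definition Dof :: "('a \<times> 'a) set \<Rightarrow> ('a \<times> 'a) set" where
  "Dof R = {(u,v). (u,v) \<in> R \<and> (v,u) \<notin> R}"

definition Bof :: "('a \<times> 'a) set \<Rightarrow> 'a set set" where
  "Bof R = {{u,v} | u v. (u,v) \<in> R \<and> (v,u) \<in> R}"

definition Aof :: "('a \<times> 'a) set \<Rightarrow> 'a set set" where
  "Aof R = {{u,v} | u v. (u,v) \<in> R \<and> (v,u) \<notin> R}"

lemma card2_neq: "card {u,v} = 2 \<Longrightarrow> u \<noteq> v"
  by auto

lemma fwd: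
  assumes c2: "\<forall>e\<in>E. card e = 2" and AE: "A \<subseteq> E" and o: "orientation A D" and BE: "B \<subseteq> E - A"
  shows "D \<union> symB B \<subseteq> symB E" "Aof (D \<union> symB B) = A" "Dof (D \<union> symB B) = D" "Bof (D \<union> symB B) = B"
proof -
  let ?R = "D \<union> symB B"
  have oA: "\<And>u v. (u,v) \<in> D \<Longrightarrow> {u,v} \<in> A" using o unfolding orientation_def by auto
  have oI: "(u,v) \<in> D \<longleftrightarrow> (v,u) \<notin> D" if a: "{u,v} \<in> A" for u v
  proof -
    have "card {u,v} = 2" using a AE c2 by auto
    then have "u \<noteq> v" by (rule card2_neq)
    then show ?thesis using o a unfolding orientation_def by blast
  qed
  have sym: "\<And>u v. (u,v) \<in> symB B \<Longrightarrow> (v,u) \<in> symB B" unfolding symB_def by (simp add: insert_commute)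
  have key: "\<And>u v. (u,v) \<in> D \<Longrightarrow> (v,u) \<notin> ?R"
  proof -
    fix u v assume d: "(u,v) \<in> D"
    then have a: "{u,v} \<in> A" by (rule oA)
    then have "(v,u) \<notin> D" using oI d by blast
    moreover have "{v,u} \<notin> B" using a BE by (auto simp: insert_commute)
    ultimately show "(v,u) \<notin> ?R" unfolding symB_def by auto
  qed
  have inD: "\<And>u v. (u,v) \<in> ?R \<Longrightarrow> (v,u) \<notin> ?R \<Longrightarrow> (u,v) \<in> D"
    using sym by blast
  show "?R \<subseteq> symB E" using oA AE BE unfolding symB_def by auto
  show "Dof ?R = D"
  proof
    show "Dof ?R \<subseteq> D" unfolding Dof_def using inD by auto
    show "D \<subseteq> Dof ?R" unfolding Dof_def using key by auto
  qed
  show "Bof ?R = B"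
  proof
    show "Bof ?R \<subseteq> B"
    proof
      fix e assume "e \<in> Bof ?R"
      then obtain u v where e: "e = {u,v}" "(u,v) \<in> ?R" "(v,u) \<in> ?R" unfolding Bof_def by blast
      then have "(u,v) \<notin> D" using key by blast
      then show "e \<in> B" using e unfolding symB_def by auto
    qed
    show "B \<subseteq> Bof ?R"
    proof
      fix e assume eB: "e \<in> B"
      then have "card e = 2" using BE c2 by auto
      then obtain u v where e: "e = {u,v}" by (meson card_2_iff)
      then have "(u,v) \<in> ?R" "(v,u) \<in> ?R" using eB unfolding symB_def by (auto simp: insert_commute)
      then show "e \<in> Bof ?R" unfolding Bof_def using e by blast
    qed
  qed
  show "Aof ?R = A"
  proof
    show "Aof ?R \<subseteq> A"
    proof
      fix e assume "e \<in> Aof ?R"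
      then obtain u v where e: "e = {u,v}" "(u,v) \<in> ?R" "(v,u) \<notin> ?R" unfolding Aof_def by blast
      then show "e \<in> A" using inD oA by blast
    qed
    show "A \<subseteq> Aof ?R"
    proof
      fix e assume eA: "e \<in> A"
      then have "card e = 2" using AE c2 by auto
      then obtain u v where e: "e = {u,v}" by (meson card_2_iff)
      show "e \<in> Aof ?R"
      proof (cases "(u,v) \<in> D")
        case True
        then have "(u,v) \<in> ?R" "(v,u) \<notin> ?R" using key by auto
        then show ?thesis unfolding Aof_def using e by blast
      next
        case False
        then have d: "(v,u) \<in> D" using oI eA e by blast
        then have "(v,u) \<in> ?R" "(u,v) \<notin> ?R" using key by auto
        moreover have "e = {v,u}" using e by (simp add: insert_commute)
        ultimately show ?thesis unfolding Aof_def by blast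
      qed
    qed
  qed
qed

lemma bwd:
  assumes R: "R \<subseteq> symB E"
  shows "orientation (Aof R) (Dof R)" "Bof R \<subseteq> E - Aof R" "R = Dof R \<union> symB (Bof R)" "Aof R \<subseteq> E"
proof -
  show "orientation (Aof R) (Dof R)"
    unfolding orientation_def
  proof (intro conjI allI impI)
    show "\<forall>(u, v)\<in>Dof R. {u, v} \<in> Aof R" unfolding Dof_def Aof_def by blast
  next
    fix u v assume "{u,v} \<in> Aof R" "u \<noteq> v"
    then obtain u' v' where q: "{u,v} = {u',v'}" "(u',v') \<in> R" "(v',u') \<notin> R" unfolding Aof_def by blast
    then have "(u' = u \<and> v' = v) \<or> (u' = v \<and> v' = u)" by (auto simp: doubleton_eq_iff)
    then show "(u, v) \<in> Dof R \<longleftrightarrow> (v, u) \<notin> Dof R" using q unfolding Dof_def by auto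
  qed
  show "Bof R \<subseteq> E - Aof R"
  proof
    fix e assume "e \<in> Bof R"
    then obtain u v where e: "e = {u,v}" "(u,v) \<in> R" "(v,u) \<in> R" unfolding Bof_def by blast
    then have "e \<in> E" using R unfolding symB_def by auto
    moreover have "e \<notin> Aof R"
    proof
      assume "e \<in> Aof R"
      then obtain u' v' where q: "e = {u',v'}" "(u',v') \<in> R" "(v',u') \<notin> R" unfolding Aof_def by blast
      then have "(u' = u \<and> v' = v) \<or> (u' = v \<and> v' = u)" using e by (auto simp: doubleton_eq_iff)
      then show False using q e by auto
    qed
    ultimately show "e \<in> E - Aof R" by simp
  qed
  show "R = Dof R \<union> symB (Bof R)"
  proof
    show "R \<subseteq> Dof R \<union> symB (Bof R)"
    proof
      fix p assume p: "p \<in> R"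
      obtain u v where uv: "p = (u,v)" by (cases p)
      show "p \<in> Dof R \<union> symB (Bof R)"
      proof (cases "(v,u) \<in> R")
        case True
        then have "{u,v} \<in> Bof R" using p uv unfolding Bof_def by blast
        then show ?thesis using uv unfolding symB_def by simp
      next
        case False
        then show ?thesis using p uv unfolding Dof_def by simp
      qed
    qed
    show "Dof R \<union> symB (Bof R) \<subseteq> R"
    proof
      fix p assume p: "p \<in> Dof R \<union> symB (Bof R)"
      obtain u v where uv: "p = (u,v)" by (cases p)
      show "p \<in> R"
      proof (cases "p \<in> Dof R")
        case True then show ?thesis unfolding Dof_def by auto
      next
        case False
        then have "{u,v} \<in> Bof R" using p uv unfolding symB_def by auto
        then obtain u' v' where q: "{u,v} = {u',v'}" "(u',v') \<in> R" "(v',u') \<in> R" unfolding Bof_def by blast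
        then have "(u' = u \<and> v' = v) \<or> (u' = v \<and> v' = u)" by (auto simp: doubleton_eq_iff)
        then show ?thesis using q uv by auto
      qed
    qed
  qed
  show "Aof R \<subseteq> E" using R unfolding Aof_def symB_def by auto
qed


lemma deg_v:
  assumes G: "simple_graph V E" and AE: "A \<subseteq> E" and o: "orientation A D" and BE: "B \<subseteq> E - A"
  shows "(2 * card {u. (v,u) \<in> D \<union> symB B} = card {u. (v,u) \<in> symB E}
          \<and> 2 * card {u. (u,v) \<in> D \<union> symB B} = card {u. (u,v) \<in> symB E})
     \<longleftrightarrow> (card {u. (u,v) \<in> D} = card {w. (v,w) \<in> D} \<and> 2 * degree B v = degree (E - A) v)"
proof -
  have c2: "\<forall>e\<in>E. card e = 2" and EV: "\<forall>e\<in>E. e \<subseteq> V" and fV: "finite V"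
    using G unfolding simple_graph_def by auto
  have "{u. {v,u} \<in> E} \<subseteq> V" using EV by auto
  then have N: "finite {u. {v,u} \<in> E}" using fV by (rule finite_subset)
  have oA: "\<And>a b. (a,b) \<in> D \<Longrightarrow> {a,b} \<in> A" using o unfolding orientation_def by auto
  let ?out = "{u. (v,u) \<in> D}" and ?inn = "{u. (u,v) \<in> D}" and ?nb = "{u. {v,u} \<in> B}"
    and ?na = "{u. {v,u} \<in> A}" and ?nea = "{u. {v,u} \<in> E - A}"
  have f1: "finite ?out" using oA AE by (intro finite_subset[OF _ N]) auto
  have f2: "finite ?inn"
  proof (intro finite_subset[OF _ N])
    show "?inn \<subseteq> {u. {v,u} \<in> E}"
    proof
      fix u assume "u \<in> ?inn"
      then have "{u,v} \<in> A" using oA by simp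
      then show "u \<in> {u. {v,u} \<in> E}" using AE by (auto simp: insert_commute)
    qed
  qed
  have f3: "finite ?nb" using BE by (intro finite_subset[OF _ N]) auto
  have f4: "finite ?na" using AE by (intro finite_subset[OF _ N]) auto
  have f5: "finite ?nea" by (intro finite_subset[OF _ N]) auto
  have s1: "{u. (v,u) \<in> D \<union> symB B} = ?out \<union> ?nb" unfolding symB_def by auto
  have s2: "{u. (u,v) \<in> D \<union> symB B} = ?inn \<union> ?nb" unfolding symB_def by (auto simp: insert_commute)
  have d1: "?out \<inter> ?nb = {}" using oA BE by auto
  have d2: "?inn \<inter> ?nb = {}"
  proof (rule ccontr)
    assume "?inn \<inter> ?nb \<noteq> {}"
    then obtain u where "(u,v) \<in> D" "{v,u} \<in> B" by auto
    then have "{u,v} \<in> A" "{u,v} \<in> B" using oA by (auto simp: insert_commute)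
    then show False using BE by auto
  qed
  have s3: "{u. (v,u) \<in> symB E} = ?na \<union> ?nea" unfolding symB_def using AE by auto
  have d3: "?na \<inter> ?nea = {}" by auto
  have s3': "{u. (u,v) \<in> symB E} = {u. (v,u) \<in> symB E}" unfolding symB_def by (auto simp: insert_commute)
  have oI: "(a,b) \<in> D \<longleftrightarrow> (b,a) \<notin> D" if a: "{a,b} \<in> A" for a b
  proof -
    have "card {a,b} = 2" using a AE c2 by auto
    then have "a \<noteq> b" by (rule card2_neq)
    then show ?thesis using o a unfolding orientation_def by blast
  qed
  have s4: "?na = ?out \<union> ?inn"
  proof
    show "?na \<subseteq> ?out \<union> ?inn" using oI by blast
    show "?out \<union> ?inn \<subseteq> ?na"
    proof
      fix u assume "u \<in> ?out \<union> ?inn"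
      then have "{v,u} \<in> A \<or> {u,v} \<in> A" using oA by auto
      then show "u \<in> ?na" by (auto simp: insert_commute)
    qed
  qed
  have d4: "?out \<inter> ?inn = {}" using oA oI by blast
  have dB: "degree B v = card ?nb" using nbr[of B v] c2 BE by auto
  have dEA: "degree (E - A) v = card ?nea" using nbr[of "E - A" v] c2 by auto
  have e1: "card {u. (v,u) \<in> D \<union> symB B} = card ?out + card ?nb"
    unfolding s1 using f1 f3 d1 by (simp add: card_Un_disjoint)
  have e2: "card {u. (u,v) \<in> D \<union> symB B} = card ?inn + card ?nb"
    unfolding s2 using f2 f3 d2 by (simp add: card_Un_disjoint)
  have e3: "card {u. (v,u) \<in> symB E} = card ?out + card ?inn + card ?nea"
    unfolding s3 using f4 f5 d3 s4 f1 f2 d4 by (simp add: card_Un_disjoint)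
  show ?thesis unfolding s3' e1 e2 e3 dB dEA by arith
qed

definition lift :: "'a \<Rightarrow> 'a \<Rightarrow> ('a \<times> bool) set" where
  "lift u v = {(u,False),(v,True)}"

definition Lr :: "('a \<times> 'a) set \<Rightarrow> ('a \<times> bool) set set" where
  "Lr R = (\<lambda>p. lift (fst p) (snd p)) ` R"

lemma lift_eq: "lift u v = lift u' v' \<longleftrightarrow> u = u' \<and> v = v'"
  unfolding lift_def by (auto simp: doubleton_eq_iff)

lemma Lr_mem: "lift u v \<in> Lr R \<longleftrightarrow> (u,v) \<in> R"
proof
  assume "lift u v \<in> Lr R"
  then obtain p where "p \<in> R" "lift u v = lift (fst p) (snd p)" unfolding Lr_def by blast
  then show "(u,v) \<in> R" by (simp add: lift_eq)
next
  assume "(u,v) \<in> R"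
  then show "lift u v \<in> Lr R" unfolding Lr_def by force
qed

lemma Lr_sub: "Lr R \<subseteq> Lr R' \<longleftrightarrow> R \<subseteq> R'"
proof
  assume "Lr R \<subseteq> Lr R'"
  then show "R \<subseteq> R'" using Lr_mem by (metis subrelI subsetD)
qed (auto simp: Lr_def)

lemma Lr_inj: "inj Lr"
  by (rule injI) (metis Lr_sub order_antisym order_refl)

lemma dc_Lr: "dc_edges E = Lr (symB E)"
proof (rule set_eqI)
  fix e
  have "e \<in> Lr (symB E) \<longleftrightarrow> (\<exists>p\<in>symB E. e = lift (fst p) (snd p))" by (auto simp: Lr_def)
  also have "\<dots> \<longleftrightarrow> (\<exists>u v. e = lift u v \<and> {u,v} \<in> E)" by (auto simp: symB_def)
  finally show "e \<in> dc_edges E \<longleftrightarrow> e \<in> Lr (symB E)" by (auto simp: dc_edges_def lift_def)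
qed

lemma deg_LF: "degree (Lr R) (v,False) = card {u. (v,u) \<in> R}"
proof -
  have "{e \<in> Lr R. (v,False) \<in> e} = lift v ` {u. (v,u) \<in> R}"
    unfolding Lr_def lift_def by force
  moreover have "inj_on (lift v) {u. (v,u) \<in> R}" by (rule inj_onI) (simp add: lift_eq)
  ultimately show ?thesis unfolding degree_def by (simp add: card_image)
qed

lemma deg_LT: "degree (Lr R) (v,True) = card {u. (u,v) \<in> R}"
proof -
  have "{e \<in> Lr R. (v,True) \<in> e} = (\<lambda>u. lift u v) ` {u. (u,v) \<in> R}"
    unfolding Lr_def lift_def by force
  moreover have "inj_on (\<lambda>u. lift u v) {u. (u,v) \<in> R}" by (rule inj_onI) (simp add: lift_eq)
  ultimately show ?thesis unfolding degree_def by (simp add: card_image)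
qed

definition PP :: "'a set \<Rightarrow> 'a set set \<Rightarrow> ('a \<times> 'a) set \<Rightarrow> bool" where
  "PP V E R \<longleftrightarrow> (\<forall>v\<in>V. 2 * card {u. (v,u) \<in> R} = card {u. (v,u) \<in> symB E}
          \<and> 2 * card {u. (u,v) \<in> R} = card {u. (u,v) \<in> symB E})"

lemma halfL: "half_graph (dc_vertices V) (dc_edges E) (Lr R) \<longleftrightarrow> R \<subseteq> symB E \<and> PP V E R"
proof -
  have "(\<forall>x\<in>dc_vertices V. 2 * degree (Lr R) x = degree (Lr (symB E)) x) \<longleftrightarrow> PP V E R"
    unfolding PP_def dc_vertices_def
  proof
    assume h: "\<forall>x\<in>V \<times> UNIV. 2 * degree (Lr R) x = degree (Lr (symB E)) x"
    show "\<forall>v\<in>V. 2 * card {u. (v,u) \<in> R} = card {u. (v,u) \<in> symB E}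
          \<and> 2 * card {u. (u,v) \<in> R} = card {u. (u,v) \<in> symB E}"
    proof
      fix v assume "v \<in> V"
      then have "2 * degree (Lr R) (v,False) = degree (Lr (symB E)) (v,False)"
        "2 * degree (Lr R) (v,True) = degree (Lr (symB E)) (v,True)" using h by auto
      then show "2 * card {u. (v,u) \<in> R} = card {u. (v,u) \<in> symB E}
          \<and> 2 * card {u. (u,v) \<in> R} = card {u. (u,v) \<in> symB E}" by (simp add: deg_LF deg_LT)
    qed
  next
    assume h: "\<forall>v\<in>V. 2 * card {u. (v,u) \<in> R} = card {u. (v,u) \<in> symB E}
          \<and> 2 * card {u. (u,v) \<in> R} = card {u. (u,v) \<in> symB E}"
    show "\<forall>x\<in>V \<times> UNIV. 2 * degree (Lr R) x = degree (Lr (symB E)) x"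
    proof
      fix x assume "x \<in> V \<times> (UNIV :: bool set)"
      then obtain v b where x: "x = (v,b)" "v \<in> V" by auto
      then show "2 * degree (Lr R) x = degree (Lr (symB E)) x" using h
        by (cases b) (simp_all add: deg_LF deg_LT)
    qed
  qed
  then show ?thesis unfolding half_graph_def dc_Lr Lr_sub by blast
qed

lemma numhalf: "num_half (dc_vertices V) (dc_edges E) = card {R. R \<subseteq> symB E \<and> PP V E R}"
proof -
  have eq: "{S. half_graph (dc_vertices V) (dc_edges E) S} = Lr ` {R. R \<subseteq> symB E \<and> PP V E R}"
  proof
    show "Lr ` {R. R \<subseteq> symB E \<and> PP V E R} \<subseteq> {S. half_graph (dc_vertices V) (dc_edges E) S}"
      using halfL by blast
    show "{S. half_graph (dc_vertices V) (dc_edges E) S} \<subseteq> Lr ` {R. R \<subseteq> symB E \<and> PP V E R}"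
    proof
      fix S assume "S \<in> {S. half_graph (dc_vertices V) (dc_edges E) S}"
      then have h: "half_graph (dc_vertices V) (dc_edges E) S" by simp
      then have "S \<subseteq> Lr (symB E)" unfolding half_graph_def dc_Lr by simp
      then have "S = Lr {p. lift (fst p) (snd p) \<in> S}" unfolding Lr_def by auto
      then show "S \<in> Lr ` {R. R \<subseteq> symB E \<and> PP V E R}" using h halfL by (metis (no_types, lifting) imageI mem_Collect_eq)
    qed
  qed
  show ?thesis unfolding num_half_def eq
    by (rule card_image) (meson Lr_inj inj_on_subset subset_UNIV)
qed


lemma PP_iff:
  assumes G: "simple_graph V E" and AE: "A \<subseteq> E" and o: "orientation A D" and BE: "B \<subseteq> E - A"
  shows "PP V E (D \<union> symB B) \<longleftrightarrow> eulerian_orientation V A D \<and> half_graph V (E - A) B"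
  unfolding PP_def eulerian_orientation_def half_graph_def
  using deg_v[OF G AE o BE] o BE by blast

lemma part2:
  assumes G: "simple_graph V E"
  shows "card {R. R \<subseteq> symB E \<and> PP V E R} = (\<Sum>A\<in>Pow E. num_eul_or V A * num_half V (E - A))"
proof -
  have c2: "\<forall>e\<in>E. card e = 2" and EV: "\<forall>e\<in>E. e \<subseteq> V" and fV: "finite V"
    using G unfolding simple_graph_def by auto
  have fE: "finite E" using EV fV by (meson Pow_iff finite_Pow_iff finite_subset subsetI)
  have "symB E \<subseteq> V \<times> V" using EV unfolding symB_def by auto
  then have fEd: "finite (symB E)" using fV by (meson finite_SigmaI finite_subset)
  define X where "X = {R. R \<subseteq> symB E \<and> PP V E R}"
  define pc where "pc A = {R\<in>X. Aof R = A}" for A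
  define Psi where "Psi = (\<lambda>p :: ('a\<times>'a) set \<times> 'a set set. fst p \<union> symB (snd p))"
  have XU: "X = (\<Union>A\<in>Pow E. pc A)"
    unfolding pc_def X_def using bwd(4) by blast
  have finpc: "finite (pc A)" for A
  proof -
    have "pc A \<subseteq> Pow (symB E)" unfolding pc_def X_def by auto
    then show ?thesis using fEd by (meson finite_Pow_iff finite_subset)
  qed
  have cardX: "card X = (\<Sum>A\<in>Pow E. card (pc A))"
    unfolding XU by (rule card_UN_disjoint) (use fE finpc in \<open>auto simp: pc_def\<close>)
  have cpc: "card (pc A) = num_eul_or V A * num_half V (E - A)" if AE: "A \<subseteq> E" for A
  proof -
    let ?P = "{D. eulerian_orientation V A D} \<times> {B. half_graph V (E - A) B}"
    have eq: "pc A = Psi ` ?P"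
    proof
      show "Psi ` ?P \<subseteq> pc A"
      proof
        fix R assume "R \<in> Psi ` ?P"
        then obtain D B where R: "R = D \<union> symB B" and e: "eulerian_orientation V A D" and h: "half_graph V (E - A) B"
          unfolding Psi_def by auto
        have o: "orientation A D" using e unfolding eulerian_orientation_def by simp
        have BE: "B \<subseteq> E - A" using h unfolding half_graph_def by simp
        show "R \<in> pc A" unfolding pc_def X_def
          using fwd[OF c2 AE o BE] PP_iff[OF G AE o BE] e h R by auto
      qed
      show "pc A \<subseteq> Psi ` ?P"
      proof
        fix R assume "R \<in> pc A"
        then have R: "R \<subseteq> symB E" "PP V E R" "Aof R = A" unfolding pc_def X_def by auto
        have o: "orientation A (Dof R)" using bwd(1)[OF R(1)] R(3) by simp
        have BE: "Bof R \<subseteq> E - A" using bwd(2)[OF R(1)] R(3) by simp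
        have Req: "R = Dof R \<union> symB (Bof R)" using bwd(3)[OF R(1)] .
        have "eulerian_orientation V A (Dof R) \<and> half_graph V (E - A) (Bof R)"
          using PP_iff[OF G AE o BE] R(2) Req by simp
        then have "(Dof R, Bof R) \<in> ?P" by simp
        moreover have "R = Psi (Dof R, Bof R)" unfolding Psi_def using Req by simp
        ultimately show "R \<in> Psi ` ?P" by blast
      qed
    qed
    have inj: "inj_on Psi ?P"
    proof (rule inj_onI)
      fix p q assume p: "p \<in> ?P" and q: "q \<in> ?P" and pq: "Psi p = Psi q"
      obtain D B where pD: "p = (D,B)" by (cases p)
      obtain D' B' where qD: "q = (D',B')" by (cases q)
      have o: "orientation A D" "orientation A D'" using p q pD qD unfolding eulerian_orientation_def by auto
      have BE: "B \<subseteq> E - A" "B' \<subseteq> E - A" using p q pD qD unfolding half_graph_def by auto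
      have "D \<union> symB B = D' \<union> symB B'" using pq pD qD unfolding Psi_def by simp
      then have "D = D' \<and> B = B'"
        using fwd(3,4)[OF c2 AE o(1) BE(1)] fwd(3,4)[OF c2 AE o(2) BE(2)] by metis
      then show "p = q" using pD qD by simp
    qed
    show ?thesis unfolding eq card_image[OF inj] card_cartesian_product num_eul_or_def num_half_def ..
  qed
  show ?thesis unfolding X_def[symmetric] cardX using cpc by (intro sum.cong) auto
qed


theorem theorem1p4:
  fixes V :: "'a set" and E :: "'a set set"
  assumes "simple_graph V E"
    and "\<forall>v\<in>V. even (degree E v)"
  shows "num_eul_or (dc_vertices V) (dc_edges E) = num_half (dc_vertices V) (dc_edges E)
       \<and> num_half (dc_vertices V) (dc_edges E) =
           (\<Sum>A\<in>Pow E. num_eul_or V A * num_half V (E - A))"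
  using part1[OF assms(1)] numhalf[of V E] part2[OF assms(1)] by simp

end
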